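(* Let $X_1$ be a random variable with $\mathbb EX_1=0$, $\operatorname{Var}X_1=1$, such that $\varphi(t)=\log\mathbb Ee^{tX_1}<\infty$ for all $t\geq-\sigma_0$ for some $\sigma_0>0$, and let $I(s)=\sup_{t\geq0}(st-\varphi(t))$, $s\geq0$. Let $m_*>1$. The following are equivalent: (a) there is $t_*>0$ with $\frac{\varphi(t_* )}{t_*^2/2}=m_*$ and for every $\varepsilon>0$, $\sup_{0<t<t_*-\varepsilon}\frac{\varphi(t)}{t^2/2}<m_*$ and $\sup_{t>t_*+\varepsilon}\frac{\varphi(t)}{t^2/2}<m_*$; (b) there is $s_*>0$ with $\frac{I(s_* )}{s_*^2/2}=\frac1{m_*}$ and for every $\varepsilon>0$, $\inf_{0<s<s_*-\varepsilon}\frac{I(s)}{s^2/2}>\frac1{m_*}$ and $\inf_{s>s_*+\varepsilon}\frac{I(s)}{s^2/2}>\frac1{m_*}$. Moreover, if these hold, then $\varphi(t_* )=I(s_* )=s_*t_*/2$, $s_*=\varphi'(t_* )=t_*m_*$, $t_*=I'(s_* )=s_*/m_*$, and $I''(s_* )\varphi''(t_* )=1$. *)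

theory Defs
  imports "HOL-Probability.Probability"
begin

definition cgf :: "'a measure \<Rightarrow> ('a \<Rightarrow> real) \<Rightarrow> real \<Rightarrow> real" where
  "cgf M X t = ln (integral\<^sup>L M (\<lambda>x. exp (t * X x)))"

text \<open>Rate function I(s) = sup over t >= 0 of (s t - phi(t)); extended-real valued
  since it may be infinite.\<close>
definition rate :: "'a measure \<Rightarrow> ('a \<Rightarrow> real) \<Rightarrow> real \<Rightarrow> ereal" where
  "rate M X s = (SUP t\<in>{0::real..}. ereal (s * t - cgf M X t))"

definition cond_a :: "(real \<Rightarrow> real) \<Rightarrow> real \<Rightarrow> real \<Rightarrow> bool" where
  "cond_a \<phi> m ts \<longleftrightarrow> ts > 0 \<and> \<phi> ts / (ts^2/2) = m \<and>
     (\<forall>\<epsilon>>0. (SUP t\<in>{0<..<ts-\<epsilon>}. ereal (\<phi> t / (t^2/2))) < ereal m \<and>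
             (SUP t\<in>{ts+\<epsilon><..}. ereal (\<phi> t / (t^2/2))) < ereal m)"

definition cond_b :: "(real \<Rightarrow> ereal) \<Rightarrow> real \<Rightarrow> real \<Rightarrow> bool" where
  "cond_b I m ss \<longleftrightarrow> ss > 0 \<and> I ss / ereal (ss^2/2) = ereal (1/m) \<and>
     (\<forall>\<epsilon>>0. (INF s\<in>{0<..<ss-\<epsilon>}. I s / ereal (s^2/2)) > ereal (1/m) \<and>
             (INF s\<in>{ss+\<epsilon><..}. I s / ereal (s^2/2)) > ereal (1/m))"

end

theory Submission
  imports Defs
begin

locale philoc =
  fixes P P1 P2 :: "real \<Rightarrow> real" and s0 :: real and R :: "real \<Rightarrow> ereal"
  assumes s0: "s0 > 0"
  and d1: "\<And>t. t > -s0 \<Longrightarrow> (P has_real_derivative P1 t) (at t)"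
  and d2: "\<And>t. t > -s0 \<Longrightarrow> (P1 has_real_derivative P2 t) (at t)"
  and p2: "\<And>t. t > -s0 \<Longrightarrow> P2 t > 0"
  and P0: "P 0 = 0" and P10: "P1 0 = 0"
  and R_def: "R = (\<lambda>s. SUP t\<in>{0::real..}. ereal (s * t - P t))"
begin

lemma P1_mono: assumes "-s0 < a" "a < b" shows "P1 a < P1 b"
proof -
  obtain z where z: "a < z" "z < b" "P1 b - P1 a = (b-a) * P2 z"
    using MVT2[of a b P1 P2] d2 assms by force
  have "P2 z > 0" using p2 z assms by auto
  then have "(b-a) * P2 z > 0" using assms by simp
  then show ?thesis using z by linarith
qed

lemma P1_pos: "t > 0 \<Longrightarrow> P1 t > 0"
  using P1_mono[of 0 t] s0 P10 by auto

lemma cont1: "t > -s0 \<Longrightarrow> isCont P1 t"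
  using d2 DERIV_isCont by blast

lemma tangent: assumes "\<tau> > -s0" "t > -s0" shows "P \<tau> + P1 \<tau> * (t - \<tau>) \<le> P t"
proof (cases t \<tau> rule: linorder_cases)
  case less
  obtain z where z: "t < z" "z < \<tau>" "P \<tau> - P t = (\<tau>-t) * P1 z"
    using MVT2[of t \<tau> P P1] d1 assms less by force
  have "P1 z < P1 \<tau>" using P1_mono z assms by auto
  then have "(\<tau>-t) * P1 z \<le> (\<tau>-t) * P1 \<tau>" using less by (intro mult_left_mono) auto
  then show ?thesis using z by (simp add: algebra_simps)
next
  case greater
  obtain z where z: "\<tau> < z" "z < t" "P t - P \<tau> = (t-\<tau>) * P1 z"
    using MVT2[of \<tau> t P P1] d1 assms greater by force
  have "P1 \<tau> < P1 z" using P1_mono z assms by auto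
  then have "(t-\<tau>) * P1 \<tau> \<le> (t-\<tau>) * P1 z" using greater by (intro mult_left_mono) auto
  then show ?thesis using z by (simp add: algebra_simps)
qed simp

lemma R_lower: "t \<ge> 0 \<Longrightarrow> ereal (s*t - P t) \<le> R s"
  unfolding R_def by (rule SUP_upper) auto

lemma legendre: assumes "\<tau> \<ge> 0" shows "R (P1 \<tau>) = ereal (P1 \<tau> * \<tau> - P \<tau>)"
proof (rule antisym)
  show "R (P1 \<tau>) \<le> ereal (P1 \<tau> * \<tau> - P \<tau>)"
    unfolding R_def
  proof (rule SUP_least)
    fix t :: real assume "t \<in> {0..}"
    then have "P \<tau> + P1 \<tau> * (t - \<tau>) \<le> P t" using tangent[of \<tau> t] assms s0 by auto
    then show "ereal (P1 \<tau> * t - P t) \<le> ereal (P1 \<tau> * \<tau> - P \<tau>)" by (simp add: algebra_simps)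
  qed
  show "ereal (P1 \<tau> * \<tau> - P \<tau>) \<le> R (P1 \<tau>)" using R_lower assms by auto
qed

lemma R_nonneg: "R s \<ge> 0"
  using R_lower[of 0 s] P0 by (simp add: zero_ereal_def)

lemma below_a: assumes ca: "cond_a P m ts" and t: "t > 0" "t \<noteq> ts" shows "P t < m*t^2/2"
proof -
  have ts: "ts > 0" and gap: "\<And>\<epsilon>. \<epsilon> > 0 \<Longrightarrow> (SUP t\<in>{0<..<ts-\<epsilon>}. ereal (P t / (t^2/2))) < ereal m \<and>
             (SUP t\<in>{ts+\<epsilon><..}. ereal (P t / (t^2/2))) < ereal m"
    using ca unfolding cond_a_def by auto
  have "ereal (P t / (t^2/2)) < ereal m"
  proof (cases "t < ts")
    case True
    define \<epsilon> where "\<epsilon> = (ts - t)/2"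
    have e: "\<epsilon> > 0" using True by (simp add: \<epsilon>_def)
    have "ereal (P t / (t^2/2)) \<le> (SUP t\<in>{0<..<ts-\<epsilon>}. ereal (P t / (t^2/2)))"
    proof (rule SUP_upper)
      have "0 < t \<and> t < ts - \<epsilon>" using t True unfolding \<epsilon>_def by (simp add: field_simps)
      then show "t \<in> {0<..<ts-\<epsilon>}" by simp
    qed
    then show ?thesis using conjunct1[OF gap[OF e]] by (rule le_less_trans)
  next
    case False
    then have F: "t > ts" using t by auto
    define \<epsilon> where "\<epsilon> = (t - ts)/2"
    have e: "\<epsilon> > 0" using F by (simp add: \<epsilon>_def)
    have "ereal (P t / (t^2/2)) \<le> (SUP t\<in>{ts+\<epsilon><..}. ereal (P t / (t^2/2)))"
    proof (rule SUP_upper)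
      have "ts + \<epsilon> < t" using t F unfolding \<epsilon>_def by (simp add: field_simps)
      then show "t \<in> {ts+\<epsilon><..}" by simp
    qed
    then show ?thesis using conjunct2[OF gap[OF e]] by (rule le_less_trans)
  qed
  then have "P t / (t^2/2) < m" by simp
  moreover have "t^2/2 > 0" using t by simp
  ultimately show ?thesis by (simp add: divide_less_eq)
qed

lemma deriv_at_min: assumes le: "\<And>t. t>0 \<Longrightarrow> P t \<le> m*t^2/2" and t1: "t1 > 0" and eq: "P t1 = m*t1^2/2"
  shows "P1 t1 = m*t1"
proof -
  have "((\<lambda>t. m*t^2/2 - P t) has_real_derivative (m*(2*t1)/2 - P1 t1)) (at t1)"
    using d1[of t1] t1 s0 by (auto intro!: derivative_eq_intros)
  moreover have "\<forall>y. \<bar>t1 - y\<bar> < t1 \<longrightarrow> m*t1^2/2 - P t1 \<le> m*y^2/2 - P y"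
  proof (intro allI impI)
    fix y assume "\<bar>t1 - y\<bar> < t1"
    then have "y > 0" by linarith
    then have "P y \<le> m*y^2/2" by (rule le)
    then show "m*t1^2/2 - P t1 \<le> m*y^2/2 - P y" using eq by linarith
  qed
  ultimately have "m*(2*t1)/2 - P1 t1 = 0" using DERIV_local_min t1 by blast
  then show ?thesis by simp
qed

lemma low: assumes s: "s>0" and m: "m>0" and le: "P (s/m) \<le> c*(s/m)^2/2"
  shows "ereal ((2 - c/m)/m) \<le> R s / ereal (s^2/2)"
proof -
  have "ereal (s*(s/m) - P (s/m)) \<le> R s" using R_lower[of "s/m" s] s m by simp
  moreover have "s^2/2 * ((2 - c/m)/m) \<le> s*(s/m) - P (s/m)"
  proof -
    have "s^2/2 * ((2 - c/m)/m) = s*(s/m) - c*(s/m)^2/2"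
      using m by (simp add: field_simps power2_eq_square)
    then show ?thesis using le by linarith
  qed
  ultimately have "ereal (s^2/2 * ((2 - c/m)/m)) \<le> R s"
    by (meson ereal_less_eq(3) order_trans)
  then have "ereal (s^2/2) * ereal ((2 - c/m)/m) \<le> R s" by simp
  then show ?thesis using s by (subst ereal_le_divide_pos) auto
qed

lemma a_to_b:
  assumes m: "m > 1" and ca: "cond_a P m ts"
  shows "cond_b R m (m*ts)" "P1 ts = m*ts" "P ts = m*ts^2/2" "R (m*ts) = ereal (m*ts^2/2)"
proof -
  have ts: "ts > 0" and eq0: "P ts / (ts^2/2) = m"
    and gap: "\<And>\<epsilon>. \<epsilon> > 0 \<Longrightarrow> (SUP t\<in>{0<..<ts-\<epsilon>}. ereal (P t / (t^2/2))) < ereal m \<and>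
             (SUP t\<in>{ts+\<epsilon><..}. ereal (P t / (t^2/2))) < ereal m"
    using ca unfolding cond_a_def by auto
  show eq: "P ts = m*ts^2/2" using eq0 ts by (simp add: field_simps)
  have le: "P t \<le> m*t^2/2" if "t > 0" for t
    using below_a[OF ca that] eq by (cases "t = ts") auto
  show der: "P1 ts = m*ts" by (rule deriv_at_min[OF le ts eq])
  show Rs: "R (m*ts) = ereal (m*ts^2/2)"
    using legendre[of ts] ts der eq by (simp add: power2_eq_square algebra_simps)
  show "cond_b R m (m*ts)"
    unfolding cond_b_def
  proof (intro conjI allI impI)
    show "m*ts > 0" using m ts by simp
    show "R (m * ts) / ereal ((m * ts)\<^sup>2 / 2) = ereal (1 / m)"
    proof -
      have "(m*ts^2/2) / ((m*ts)^2/2) = 1/m" using m ts by (simp add: power2_eq_square)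
      moreover have "(m*ts)^2/2 \<noteq> 0" using m ts by simp
      ultimately show ?thesis using Rs by simp
    qed
  next
    fix \<epsilon> :: real assume e: "\<epsilon> > 0"
    have em: "\<epsilon>/m > 0" using e m by simp
    obtain c where c1: "(SUP t\<in>{0<..<ts-\<epsilon>/m}. ereal (P t / (t^2/2))) < ereal c" and c2: "c < m"
      using ereal_dense2[OF conjunct1[OF gap[OF em]]] by auto
    have "1/m < (2 - c/m)/m"
      using m c2 by (simp add: divide_simps)
    then have "ereal (1/m) < ereal ((2 - c/m)/m)" by simp
    also have "ereal ((2 - c/m)/m) \<le> (INF s\<in>{0<..<m*ts-\<epsilon>}. R s / ereal (s^2/2))"
    proof (rule INF_greatest)
      fix s assume s: "s \<in> {0<..<m*ts-\<epsilon>}"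
      have t: "s/m \<in> {0<..<ts-\<epsilon>/m}" using s m by (auto simp: field_simps)
      have "ereal (P (s/m) / ((s/m)^2/2)) \<le> (SUP t\<in>{0<..<ts-\<epsilon>/m}. ereal (P t / (t^2/2)))"
        by (rule SUP_upper[OF t])
      then have "ereal (P (s/m) / ((s/m)^2/2)) < ereal c" using c1 by (rule le_less_trans)
      then have "P (s/m) / ((s/m)^2/2) < c" by simp
      moreover have "(s/m)^2/2 > 0" using s m by simp
      ultimately have "P (s/m) \<le> c*(s/m)^2/2" by (simp add: divide_less_eq)
      then show "ereal ((2 - c/m)/m) \<le> R s / ereal (s^2/2)" using low s m by auto
    qed
    finally show "ereal (1/m) < (INF s\<in>{0<..<m*ts-\<epsilon>}. R s / ereal (s^2/2))" .
  next
    fix \<epsilon> :: real assume e: "\<epsilon> > 0"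
    have em: "\<epsilon>/m > 0" using e m by simp
    obtain c where c1: "(SUP t\<in>{ts+\<epsilon>/m<..}. ereal (P t / (t^2/2))) < ereal c" and c2: "c < m"
      using ereal_dense2[OF conjunct2[OF gap[OF em]]] by auto
    have "1/m < (2 - c/m)/m"
      using m c2 by (simp add: divide_simps)
    then have "ereal (1/m) < ereal ((2 - c/m)/m)" by simp
    also have "ereal ((2 - c/m)/m) \<le> (INF s\<in>{m*ts+\<epsilon><..}. R s / ereal (s^2/2))"
    proof (rule INF_greatest)
      fix s assume s: "s \<in> {m*ts+\<epsilon><..}"
      have t: "s/m \<in> {ts+\<epsilon>/m<..}"
      proof -
        have "ts + \<epsilon>/m = (m*ts + \<epsilon>)/m" using m by (simp add: field_simps)
        moreover have "(m*ts+\<epsilon>)/m < s/m" using s m by (intro divide_strict_right_mono) auto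
        ultimately show ?thesis by simp
      qed
      have "ereal (P (s/m) / ((s/m)^2/2)) \<le> (SUP t\<in>{ts+\<epsilon>/m<..}. ereal (P t / (t^2/2)))"
        by (rule SUP_upper[OF t])
      then have "ereal (P (s/m) / ((s/m)^2/2)) < ereal c" using c1 by (rule le_less_trans)
      then have "P (s/m) / ((s/m)^2/2) < c" by simp
      moreover have "s > 0"
      proof -
        have "m*ts > 0" using m ts by simp
        then show ?thesis using s e by simp
      qed
      moreover have "(s/m)^2/2 > 0" using calculation(2) m by simp
      ultimately have "P (s/m) \<le> c*(s/m)^2/2" by (simp add: divide_less_eq)
      then show "ereal ((2 - c/m)/m) \<le> R s / ereal (s^2/2)" using low \<open>s>0\<close> m by auto
    qed
    finally show "ereal (1/m) < (INF s\<in>{m*ts+\<epsilon><..}. R s / ereal (s^2/2))" .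
  qed
qed

lemma ge_b: assumes cb: "cond_b R m ss" and u: "u > 0" shows "ereal (1/m) \<le> R u / ereal (u^2/2)"
proof -
  have ss: "ss > 0" and eqb: "R ss / ereal (ss^2/2) = ereal (1/m)"
    and gap: "\<And>\<epsilon>. \<epsilon> > 0 \<Longrightarrow> (INF s\<in>{0<..<ss-\<epsilon>}. R s / ereal (s^2/2)) > ereal (1/m) \<and>
             (INF s\<in>{ss+\<epsilon><..}. R s / ereal (s^2/2)) > ereal (1/m)"
    using cb unfolding cond_b_def by auto
  consider "u = ss" | "u < ss" | "u > ss" by linarith
  then show ?thesis
  proof cases
    case 1 then show ?thesis using eqb by simp
  next
    case 2
    define \<epsilon> where "\<epsilon> = (ss - u)/2"
    have e: "\<epsilon> > 0" using 2 by (simp add: \<epsilon>_def)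
    have "(INF s\<in>{0<..<ss-\<epsilon>}. R s / ereal (s^2/2)) \<le> R u / ereal (u^2/2)"
    proof (rule INF_lower)
      have "0 < u \<and> u < ss - \<epsilon>" using u 2 unfolding \<epsilon>_def by (simp add: field_simps)
      then show "u \<in> {0<..<ss-\<epsilon>}" by simp
    qed
    then show ?thesis using conjunct1[OF gap[OF e]] by simp
  next
    case 3
    define \<epsilon> where "\<epsilon> = (u - ss)/2"
    have e: "\<epsilon> > 0" using 3 by (simp add: \<epsilon>_def)
    have "(INF s\<in>{ss+\<epsilon><..}. R s / ereal (s^2/2)) \<le> R u / ereal (u^2/2)"
    proof (rule INF_lower)
      have "ss + \<epsilon> < u" using u 3 unfolding \<epsilon>_def by (simp add: field_simps)
      then show "u \<in> {ss+\<epsilon><..}" by simp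
    qed
    then show ?thesis using conjunct2[OF gap[OF e]] by simp
  qed
qed

lemma key: assumes t: "t > 0" and k: "k > 0" and kb: "ereal k \<le> R (P1 t) / ereal ((P1 t)^2/2)"
  shows "P t \<le> t^2/(2*k)"
proof -
  define u where "u = P1 t"
  have u: "u > 0" using P1_pos t by (simp add: u_def)
  have Ru: "R u = ereal (u*t - P t)" using legendre[of t] t by (simp add: u_def)
  have "u^2/2 \<noteq> 0" using u by simp
  then have "k \<le> (u*t - P t) / (u^2/2)" using kb Ru by (simp add: u_def)
  then have "k * (u^2/2) \<le> u*t - P t" using u by (simp add: pos_le_divide_eq)
  moreover have "(t - k*u)^2/(2*k) = t^2/(2*k) - u*t + k*(u^2/2)"
    using k by (simp add: field_simps power2_eq_square)
  moreover have "0 \<le> (t - k*u)^2/(2*k)" using k by simp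
  ultimately show ?thesis by linarith
qed

lemma ratio_bound: assumes t: "t > 0" and k: "k > 0" and le: "P t \<le> t^2/(2*k)"
  shows "ereal (P t / (t^2/2)) \<le> ereal (1/k)"
proof -
  have "P t / (t^2/2) \<le> (t^2/(2*k)) / (t^2/2)" using le t by (intro divide_right_mono) auto
  also have "\<dots> = 1/k" using t k by (simp add: field_simps power2_eq_square)
  finally show ?thesis by simp
qed

lemma b_to_a:
  assumes m: "m > 1" and cb: "cond_b R m ss"
  shows "cond_a P m (ss/m)"
proof -
  have ss: "ss > 0" and eqb: "R ss / ereal (ss^2/2) = ereal (1/m)"
    and gap: "\<And>\<epsilon>. \<epsilon> > 0 \<Longrightarrow> (INF s\<in>{0<..<ss-\<epsilon>}. R s / ereal (s^2/2)) > ereal (1/m) \<and>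
             (INF s\<in>{ss+\<epsilon><..}. R s / ereal (s^2/2)) > ereal (1/m)"
    using cb unfolding cond_b_def by auto
  define t1 where "t1 = ss/m"
  have t1: "t1 > 0" using ss m by (simp add: t1_def)
  have le: "P t \<le> m*t^2/2" if "t > 0" for t
  proof -
    have "P t \<le> t^2/(2*(1/m))"
      using key[OF that, of "1/m"] ge_b[OF cb P1_pos[OF that]] m by simp
    then show ?thesis by (simp add: mult.commute)
  qed
  have Rss: "R ss = ereal (ss^2/(2*m))"
  proof (cases "R ss")
    case (real r)
    have "ss^2/2 \<noteq> 0" using ss by simp
    then have "r / (ss^2/2) = 1/m" using eqb real by simp
    then show ?thesis using real ss m by (simp add: field_simps)
  next
    case PInf
    have "ss^2/2 \<ge> 0" by simp
    then show ?thesis using eqb PInf by simp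
  next
    case MInf then show ?thesis using R_nonneg[of ss] by simp
  qed
  have "ereal (ss*t1 - P t1) \<le> R ss" using R_lower t1 by simp
  then have "ss*t1 - P t1 \<le> ss^2/(2*m)" using Rss by simp
  moreover have "ss*t1 - m*t1^2/2 = ss^2/(2*m)" using m by (simp add: t1_def field_simps power2_eq_square)
  ultimately have eq: "P t1 = m*t1^2/2" using le[OF t1] by linarith
  have der: "P1 t1 = m*t1" by (rule deriv_at_min[OF le t1 eq])
  then have der': "P1 t1 = ss" using m by (simp add: t1_def)
  show ?thesis
    unfolding cond_a_def t1_def[symmetric]
  proof (intro conjI allI impI)
    show "t1 > 0" by (rule t1)
    show "P t1 / (t1^2/2) = m" using eq t1 by (simp add: field_simps)
  next
    fix \<epsilon> :: real assume e: "\<epsilon> > 0"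
    show "(SUP t\<in>{0<..<t1-\<epsilon>}. ereal (P t / (t^2/2))) < ereal m"
    proof (cases "t1 - \<epsilon> \<le> 0")
      case True
      then have "{0<..<t1-\<epsilon>} = {}" by auto
      then show ?thesis by (simp add: bot_ereal_def)
    next
      case False
      define a where "a = t1 - \<epsilon>"
      have a: "a > 0" "a < t1" using False e by (auto simp: a_def)
      define e' where "e' = ss - P1 a"
      have e': "e' > 0" using P1_mono[of a t1] a s0 der' by (simp add: e'_def)
      obtain k where k1: "ereal (1/m) < ereal k" and k2: "ereal k < (INF s\<in>{0<..<ss-e'}. R s / ereal (s^2/2))"
        using ereal_dense2[OF conjunct1[OF gap[OF e']]] by auto
      have k: "k > 1/m" using k1 by simp
      have kpos: "k > 0" using k m by (smt (verit) divide_pos_pos)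
      have "(SUP t\<in>{0<..<a}. ereal (P t / (t^2/2))) \<le> ereal (1/k)"
      proof (rule SUP_least)
        fix t assume t: "t \<in> {0<..<a}"
        have "P1 t < P1 a" using P1_mono[of t a] t s0 by auto
        then have u: "P1 t \<in> {0<..<ss-e'}" using P1_pos[of t] t by (auto simp: e'_def)
        have "(INF s\<in>{0<..<ss-e'}. R s / ereal (s^2/2)) \<le> R (P1 t) / ereal ((P1 t)^2/2)"
          by (rule INF_lower[OF u])
        then have "ereal k \<le> R (P1 t) / ereal ((P1 t)^2/2)" using k2 by simp
        then have "P t \<le> t^2/(2*k)" using key[of t k] t kpos by simp
        then show "ereal (P t / (t^2/2)) \<le> ereal (1/k)" using ratio_bound[of t k] t kpos by simp
      qed
      also have "ereal (1/k) < ereal m"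
      proof -
        have "1 < k*m" using k m by (simp add: field_simps)
        then have "1/k < m" using kpos by (simp add: field_simps)
        then show ?thesis by simp
      qed
      finally show ?thesis by (simp add: a_def)
    qed
    show "(SUP t\<in>{t1+\<epsilon><..}. ereal (P t / (t^2/2))) < ereal m"
    proof -
      define b where "b = t1 + \<epsilon>"
      have b: "b > t1" using e by (auto simp: b_def)
      define e' where "e' = P1 b - ss"
      have e': "e' > 0" using P1_mono[of t1 b] b t1 s0 der' by (simp add: e'_def)
      obtain k where k1: "ereal (1/m) < ereal k" and k2: "ereal k < (INF s\<in>{ss+e'<..}. R s / ereal (s^2/2))"
        using ereal_dense2[OF conjunct2[OF gap[OF e']]] by auto
      have k: "k > 1/m" using k1 by simp
      have kpos: "k > 0" using k m by (smt (verit) divide_pos_pos)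
      have "(SUP t\<in>{b<..}. ereal (P t / (t^2/2))) \<le> ereal (1/k)"
      proof (rule SUP_least)
        fix t assume t: "t \<in> {b<..}"
        have tpos: "t > 0" using t b t1 by auto
        have "P1 b < P1 t" using P1_mono[of b t] t b t1 s0 by auto
        then have u: "P1 t \<in> {ss+e'<..}" by (auto simp: e'_def)
        have "(INF s\<in>{ss+e'<..}. R s / ereal (s^2/2)) \<le> R (P1 t) / ereal ((P1 t)^2/2)"
          by (rule INF_lower[OF u])
        then have "ereal k \<le> R (P1 t) / ereal ((P1 t)^2/2)" using k2 by simp
        then have "P t \<le> t^2/(2*k)" using key[of t k] tpos kpos by simp
        then show "ereal (P t / (t^2/2)) \<le> ereal (1/k)" using ratio_bound[of t k] tpos kpos by simp
      qed
      also have "ereal (1/k) < ereal m"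
      proof -
        have "1 < k*m" using k m by (simp add: field_simps)
        then have "1/k < m" using kpos by (simp add: field_simps)
        then show ?thesis by simp
      qed
      finally show ?thesis by (simp add: b_def)
    qed
  qed
qed

lemma gt_b: assumes cb: "cond_b R m ss" and u: "u > 0" "u \<noteq> ss" shows "ereal (1/m) < R u / ereal (u^2/2)"
proof -
  have ss: "ss > 0"
    and gap: "\<And>\<epsilon>. \<epsilon> > 0 \<Longrightarrow> (INF s\<in>{0<..<ss-\<epsilon>}. R s / ereal (s^2/2)) > ereal (1/m) \<and>
             (INF s\<in>{ss+\<epsilon><..}. R s / ereal (s^2/2)) > ereal (1/m)"
    using cb unfolding cond_b_def by auto
  consider "u < ss" | "u > ss" using u by linarith
  then show ?thesis
  proof cases
    case 1
    define \<epsilon> where "\<epsilon> = (ss - u)/2"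
    have e: "\<epsilon> > 0" using 1 by (simp add: \<epsilon>_def)
    have "(INF s\<in>{0<..<ss-\<epsilon>}. R s / ereal (s^2/2)) \<le> R u / ereal (u^2/2)"
    proof (rule INF_lower)
      have "0 < u \<and> u < ss - \<epsilon>" using u 1 unfolding \<epsilon>_def by (simp add: field_simps)
      then show "u \<in> {0<..<ss-\<epsilon>}" by simp
    qed
    then show ?thesis using conjunct1[OF gap[OF e]] by simp
  next
    case 2
    define \<epsilon> where "\<epsilon> = (u - ss)/2"
    have e: "\<epsilon> > 0" using 2 by (simp add: \<epsilon>_def)
    have "(INF s\<in>{ss+\<epsilon><..}. R s / ereal (s^2/2)) \<le> R u / ereal (u^2/2)"
    proof (rule INF_lower)
      have "ss + \<epsilon> < u" using u 2 unfolding \<epsilon>_def by (simp add: field_simps)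
      then show "u \<in> {ss+\<epsilon><..}" by simp
    qed
    then show ?thesis using conjunct2[OF gap[OF e]] by simp
  qed
qed

lemma moreover_part:
  assumes m: "m > 1" and ca: "cond_a P m ts" and cb: "cond_b R m ss"
  shows "R ss = ereal (P ts) \<and> P ts = ss * ts / 2 \<and>
           (P has_real_derivative ss) (at ts) \<and> ss = ts * m \<and>
           (\<exists>J. (\<forall>\<^sub>F s in nhds ss. R s = ereal (J s)) \<and>
                (J has_real_derivative ts) (at ss) \<and> ts = ss / m \<and>
                (\<exists>I2 \<phi>2. (deriv J has_real_derivative I2) (at ss) \<and>
                          (deriv P has_real_derivative \<phi>2) (at ts) \<and>
                          I2 * \<phi>2 = 1))"
proof -
  note A = a_to_b[OF m ca]
  have ts: "ts > 0" using ca unfolding cond_a_def by auto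
  have qm: "R (m*ts) / ereal ((m*ts)^2/2) = ereal (1/m)" using A(1) unfolding cond_b_def by auto
  have mts: "m*ts > 0" using m ts by simp
  have sseq: "ss = m*ts"
  proof (rule ccontr)
    assume "ss \<noteq> m*ts"
    then have "ereal (1/m) < R (m*ts) / ereal ((m*ts)^2/2)" using gt_b[OF cb mts] by auto
    then show False using qm by simp
  qed
  have der: "P1 ts = ss" using A(2) sseq by simp
  have Pts: "P ts = m*ts^2/2" by (rule A(3))
  have c1: "R ss = ereal (P ts)" using A(4) Pts sseq by simp
  have c2: "P ts = ss * ts / 2" using Pts sseq by (simp add: power2_eq_square)
  have c3: "(P has_real_derivative ss) (at ts)" using d1[of ts] ts s0 der by simp
  define \<tau> where "\<tau> = inv_into {0<..} P1"
  have inj: "inj_on P1 {0<..}"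
  proof (rule strict_mono_on_imp_inj_on)
    show "strict_mono_on {0<..} P1"
      unfolding strict_mono_on_def using P1_mono s0 by auto
  qed
  have tauP: "\<tau> (P1 z) = z" if "z > 0" for z using inj that by (simp add: \<tau>_def)
  define a where "a = P1 (ts/2)"
  define b where "b = P1 (2*ts)"
  have ssN: "a < ss" "ss < b" using P1_mono[of "ts/2" ts] P1_mono[of ts "2*ts"] ts s0 der
    by (auto simp: a_def b_def)
  have tauN: "\<tau> s > 0 \<and> P1 (\<tau> s) = s" if s: "a < s" "s < b" for s
  proof -
    have "\<exists>t. ts/2 \<le> t \<and> t \<le> 2*ts \<and> P1 t = s"
    proof (rule IVT)
      show "P1 (ts/2) \<le> s" "s \<le> P1 (2*ts)" using s by (auto simp: a_def b_def)
      show "ts/2 \<le> 2*ts" using ts by simp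
      show "\<forall>x. ts/2 \<le> x \<and> x \<le> 2*ts \<longrightarrow> isCont P1 x" using cont1 ts s0 by auto
    qed
    then obtain t where t: "ts/2 \<le> t" "P1 t = s" by auto
    have tpos: "t > 0" using t ts by linarith
    then have "\<tau> s = t" using tauP t by auto
    then show ?thesis using tpos t by simp
  qed
  have tau_ss: "\<tau> ss = ts" using tauP[OF ts] der by simp
  have Dtau: "DERIV \<tau> s :> inverse (P2 (\<tau> s))" if s: "a < s" "s < b" for s
  proof (rule DERIV_inverse_function[where f=P1 and a=a and b=b])
    have tp: "\<tau> s > 0" using tauN[OF s] by simp
    show "DERIV P1 (\<tau> s) :> P2 (\<tau> s)" using d2[of "\<tau> s"] tp s0 by simp
    show "P2 (\<tau> s) \<noteq> 0" using p2[of "\<tau> s"] tp s0 by simp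
    show "a < s" "s < b" by (rule s)+
    show "\<And>y. a < y \<Longrightarrow> y < b \<Longrightarrow> P1 (\<tau> y) = y" using tauN by blast
    have "isCont \<tau> (P1 (\<tau> s))"
    proof (rule isCont_inverse_function[where d="\<tau> s/2" and f=P1 and g=\<tau> and x="\<tau> s"])
      show "0 < \<tau> s/2" using tp by simp
      show "\<tau> (P1 z) = z" if "\<bar>z - \<tau> s\<bar> \<le> \<tau> s/2" for z
        using tauP[of z] abs_le_D2[OF that] tp by simp
      show "isCont P1 z" if "\<bar>z - \<tau> s\<bar> \<le> \<tau> s/2" for z
        using cont1[of z] abs_le_D2[OF that] tp s0 by simp
    qed
    then show "isCont \<tau> s" using tauN[OF s] by simp
  qed
  define J where "J s = s * \<tau> s - P (\<tau> s)" for s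
  have DJ: "DERIV J s :> \<tau> s" if s: "a < s" "s < b" for s
  proof -
    have tp: "\<tau> s > 0" and P1t: "P1 (\<tau> s) = s" using tauN[OF s] by auto
    have h1: "DERIV (\<lambda>x. x * \<tau> x) s :> 1 * \<tau> s + inverse (P2 (\<tau> s)) * s"
      by (rule DERIV_mult[OF DERIV_ident Dtau[OF s]])
    have h2: "DERIV (\<lambda>x. P (\<tau> x)) s :> P1 (\<tau> s) * inverse (P2 (\<tau> s))"
      by (rule DERIV_chain2[OF d1 Dtau[OF s]]) (use tp s0 in simp)
    have "DERIV J s :> (1 * \<tau> s + inverse (P2 (\<tau> s)) * s) - P1 (\<tau> s) * inverse (P2 (\<tau> s))"
      unfolding J_def by (rule DERIV_diff[OF h1 h2])
    then show ?thesis using P1t by (simp add: mult.commute)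
  qed
  have ev: "\<forall>\<^sub>F s in nhds ss. R s = ereal (J s)"
    unfolding eventually_nhds
  proof (intro exI conjI ballI)
    show "open {a<..<b}" by simp
    show "ss \<in> {a<..<b}" using ssN by simp
    fix s assume "s \<in> {a<..<b}"
    then have tp: "\<tau> s > 0" and P1t: "P1 (\<tau> s) = s" using tauN by auto
    have "R (P1 (\<tau> s)) = ereal (P1 (\<tau> s) * \<tau> s - P (\<tau> s))" using legendre tp by simp
    then show "R s = ereal (J s)" using P1t by (simp add: J_def)
  qed
  have c5: "(J has_real_derivative ts) (at ss)" using DJ[OF ssN] tau_ss by simp
  have c6: "ts = ss / m" using sseq m by simp
  have c7: "(deriv J has_real_derivative inverse (P2 ts)) (at ss)"
  proof (rule has_field_derivative_transform_within_open[where S="{a<..<b}"])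
    show "(\<tau> has_field_derivative inverse (P2 ts)) (at ss)" using Dtau[OF ssN] tau_ss by simp
    show "open {a<..<b}" by simp
    show "ss \<in> {a<..<b}" using ssN by simp
    show "\<tau> x = deriv J x" if "x \<in> {a<..<b}" for x using DJ[of x] that
      by (simp add: DERIV_imp_deriv)
  qed
  have c8: "(deriv P has_real_derivative P2 ts) (at ts)"
  proof (rule has_field_derivative_transform_within_open[where S="{-s0<..}"])
    show "(P1 has_field_derivative P2 ts) (at ts)" using d2 ts s0 by simp
    show "open {-s0<..}" by simp
    show "ts \<in> {-s0<..}" using ts s0 by simp
    show "P1 x = deriv P x" if "x \<in> {-s0<..}" for x using d1[of x] that
      by (simp add: DERIV_imp_deriv)
  qed
  have c9: "inverse (P2 ts) * P2 ts = 1" using p2[of ts] ts s0 by simp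
  have "\<exists>I2 \<phi>2. (deriv J has_real_derivative I2) (at ss) \<and> (deriv P has_real_derivative \<phi>2) (at ts) \<and> I2 * \<phi>2 = 1"
    using c7 c8 c9 by blast
  then have c10: "\<exists>J. (\<forall>\<^sub>F s in nhds ss. R s = ereal (J s)) \<and>
                (J has_real_derivative ts) (at ss) \<and> ts = ss / m \<and>
                (\<exists>I2 \<phi>2. (deriv J has_real_derivative I2) (at ss) \<and>
                          (deriv P has_real_derivative \<phi>2) (at ts) \<and>
                          I2 * \<phi>2 = 1)"
    using ev c5 c6 by blast
  have c4: "ss = ts * m" using sseq by simp
  show ?thesis using c1 c2 c3 c4 c10 by blast
qed

end

lemma deriv_under_integral:
  fixes f g :: "real \<Rightarrow> 'a \<Rightarrow> real" and M :: "'a measure"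
  assumes \<delta>: "\<delta> > 0"
  and intf: "\<And>t. t \<in> {t0-\<delta>..t0+\<delta>} \<Longrightarrow> integrable M (f t)"
  and gm: "g t0 \<in> borel_measurable M"
  and intG: "integrable M G"
  and der: "\<And>x t. t \<in> {t0-\<delta>..t0+\<delta>} \<Longrightarrow> ((\<lambda>t. f t x) has_real_derivative g t x) (at t)"
  and bnd: "\<And>x t. t \<in> {t0-\<delta>..t0+\<delta>} \<Longrightarrow> \<bar>g t x\<bar> \<le> G x"
  shows "((\<lambda>t. \<integral>x. f t x \<partial>M) has_real_derivative (\<integral>x. g t0 x \<partial>M)) (at t0)"
proof -
  let ?F = "\<lambda>t. \<integral>x. f t x \<partial>M"
  let ?S = "{t0-\<delta><..<t0+\<delta>}"
  have t0S: "t0 \<in> ?S" using \<delta> by simp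
  have "((\<lambda>y. (?F y - ?F t0) / (y - t0)) \<longlongrightarrow> (\<integral>x. g t0 x \<partial>M)) (at t0 within ?S)"
    unfolding tendsto_at_iff_sequentially
  proof (intro allI impI)
    fix Y :: "nat \<Rightarrow> real" assume Y: "\<forall>i. Y i \<in> ?S - {t0}" and Ylim: "Y \<longlonglongrightarrow> t0"
    have YI: "Y i \<in> {t0-\<delta>..t0+\<delta>}" for i using Y[rule_format, of i] by auto
    have t0I: "t0 \<in> {t0-\<delta>..t0+\<delta>}" using \<delta> by simp
    have Yne: "Y i \<noteq> t0" for i using Y by auto
    define s where "s i x = (f (Y i) x - f t0 x) / (Y i - t0)" for i x
    have eq: "((\<lambda>y. (?F y - ?F t0) / (y - t0)) \<circ> Y) i = (\<integral>x. s i x \<partial>M)" for i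
      using intf[OF YI] intf[OF t0I] by (simp add: s_def)
    have "(\<lambda>i. \<integral>x. s i x \<partial>M) \<longlonglongrightarrow> (\<integral>x. g t0 x \<partial>M)"
    proof (rule integral_dominated_convergence[where w=G])
      show "g t0 \<in> borel_measurable M" by (rule gm)
      show "s i \<in> borel_measurable M" for i
        using intf[OF YI] intf[OF t0I] unfolding s_def by measurable
      show "integrable M G" by (rule intG)
      show "AE x in M. (\<lambda>i. s i x) \<longlonglongrightarrow> g t0 x"
      proof (rule AE_I2)
        fix x
        have "((\<lambda>y. (f y x - f t0 x) / (y - t0)) \<longlongrightarrow> g t0 x) (at t0)"
          using der[OF t0I, of x] unfolding has_field_derivative_iff .
        then have "((\<lambda>y. (f y x - f t0 x) / (y - t0)) \<circ> Y) \<longlonglongrightarrow> g t0 x"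
          unfolding tendsto_at_iff_sequentially using Yne Ylim by auto
        then show "(\<lambda>i. s i x) \<longlonglongrightarrow> g t0 x" by (simp add: s_def o_def)
      qed
      show "AE x in M. norm (s i x) \<le> G x" for i
      proof (rule AE_I2)
        fix x
        have dd: "\<And>t. t \<in> {t0-\<delta>..t0+\<delta>} \<Longrightarrow> ((\<lambda>t. f t x) has_real_derivative g t x) (at t)" using der by blast
        have "\<exists>z. z \<in> {t0-\<delta>..t0+\<delta>} \<and> s i x = g z x"
        proof (cases "Y i < t0")
          case True
          obtain z where z: "Y i < z" "z < t0" "f t0 x - f (Y i) x = (t0 - Y i) * g z x"
            using MVT2[of "Y i" t0 "\<lambda>t. f t x" "\<lambda>t. g t x"] True dd YI[of i] t0I by force
          have "z \<in> {t0-\<delta>..t0+\<delta>}" using z YI[of i] by auto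
          moreover have "s i x = g z x" using z True unfolding s_def
            by (simp add: field_simps)
          ultimately show ?thesis by blast
        next
          case False
          then have F: "t0 < Y i" using Yne[of i] by linarith
          obtain z where z: "t0 < z" "z < Y i" "f (Y i) x - f t0 x = (Y i - t0) * g z x"
            using MVT2[of t0 "Y i" "\<lambda>t. f t x" "\<lambda>t. g t x"] F dd YI[of i] t0I by force
          have "z \<in> {t0-\<delta>..t0+\<delta>}" using z YI[of i] by auto
          moreover have "s i x = g z x" using z F unfolding s_def
            by (simp add: field_simps)
          ultimately show ?thesis by blast
        qed
        then show "norm (s i x) \<le> G x" using bnd by auto
      qed
    qed
    then show "((\<lambda>y. (?F y - ?F t0) / (y - t0)) \<circ> Y) \<longlonglongrightarrow> (\<integral>x. g t0 x \<partial>M)"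
      unfolding eq .
  qed
  then have "((\<lambda>y. (?F y - ?F t0) / (y - t0)) \<longlongrightarrow> (\<integral>x. g t0 x \<partial>M)) (at t0)"
    using tendsto_within_open[OF t0S] by (metis open_greaterThanLessThan)
  then show ?thesis unfolding has_field_derivative_iff .
qed


lemma pow_exp_bound: fixes z :: real assumes z: "z \<ge> 0" shows "z^n \<le> (real n)^n * exp z"
proof (cases "n = 0")
  case True then show ?thesis using z by simp
next
  case False
  then have n: "real n > 0" by simp
  have "(z / real n)^n \<le> (1 + z / real n)^n"
    using z n by (intro power_mono) auto
  also have "\<dots> \<le> exp z" using exp_ge_one_plus_x_over_n_power_n[where x=z and n=n] z False by simp
  finally have "(z / real n)^n \<le> exp z" .
  then have "(real n)^n * (z / real n)^n \<le> (real n)^n * exp z"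
    using n by (intro mult_left_mono) auto
  moreover have "(real n)^n * (z / real n)^n = z^n" using n by (simp add: power_divide)
  ultimately show ?thesis by simp
qed

lemma exp_abs_le: fixes y t \<eta> :: real
  shows "exp (\<eta> * \<bar>y\<bar>) * exp (t * y) \<le> exp ((t+\<eta>) * y) + exp ((t-\<eta>) * y)"
proof (cases "y \<ge> 0")
  case True
  then have "exp (\<eta> * \<bar>y\<bar>) * exp (t * y) = exp ((t+\<eta>) * y)"
    by (simp add: exp_add[symmetric] algebra_simps)
  then show ?thesis by (simp add: add_increasing2)
next
  case False
  then have "exp (\<eta> * \<bar>y\<bar>) * exp (t * y) = exp ((t-\<eta>) * y)"
    by (simp add: exp_add[symmetric] algebra_simps)
  then show ?thesis by (simp add: add_increasing)
qed

lemma abs_pow_exp: fixes y t \<eta> :: real assumes \<eta>: "\<eta> > 0"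
  shows "\<bar>y\<bar>^n * exp (t*y) \<le> (real n/\<eta>)^n * (exp ((t+\<eta>)*y) + exp ((t-\<eta>)*y))"
proof -
  have "(\<eta>*\<bar>y\<bar>)^n \<le> (real n)^n * exp (\<eta>*\<bar>y\<bar>)" using \<eta> by (intro pow_exp_bound) auto
  then have "\<bar>y\<bar>^n \<le> (real n/\<eta>)^n * exp (\<eta>*\<bar>y\<bar>)"
    using \<eta> by (simp add: power_mult_distrib power_divide field_simps)
  then have "\<bar>y\<bar>^n * exp (t*y) \<le> (real n/\<eta>)^n * (exp (\<eta>*\<bar>y\<bar>) * exp (t*y))"
    by (metis mult.assoc exp_gt_zero less_eq_real_def mult_right_mono)
  also have "\<dots> \<le> (real n/\<eta>)^n * (exp ((t+\<eta>)*y) + exp ((t-\<eta>)*y))"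
    using \<eta> exp_abs_le by (intro mult_left_mono) auto
  finally show ?thesis .
qed

lemma exp_between: fixes a b t y :: real assumes "t \<in> {a..b}"
  shows "exp (t*y) \<le> exp (b*y) + exp (a*y)"
proof (cases "y \<ge> 0")
  case True
  then have "exp (t*y) \<le> exp (b*y)" using assms by (auto intro: mult_right_mono)
  then show ?thesis by (simp add: add_increasing2)
next
  case False
  then have "exp (t*y) \<le> exp (a*y)" using assms by (auto intro: mult_right_mono_neg)
  then show ?thesis by (simp add: add_increasing)
qed

locale mgfloc = prob_space M for M :: "'a measure" +
  fixes X :: "'a \<Rightarrow> real" and s0 :: real
  assumes Xm[measurable]: "X \<in> borel_measurable M"
  and s0: "s0 > 0"
  and intexp: "\<And>t. t \<ge> -s0 \<Longrightarrow> integrable M (\<lambda>x. exp (t * X x))"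
  and EX: "expectation X = 0"
  and VX: "variance X = 1"
begin

lemma int_pow: assumes t: "t > -s0" shows "integrable M (\<lambda>x. X x ^ n * exp (t * X x))"
proof -
  define \<eta> where "\<eta> = (t + s0)/2"
  have \<eta>: "\<eta> > 0" using t by (simp add: \<eta>_def)
  have i1: "integrable M (\<lambda>x. exp ((t+\<eta>) * X x))" using intexp \<eta> t by simp
  have "t - \<eta> \<ge> -s0" using t unfolding \<eta>_def by (simp add: field_simps)
  then have i2: "integrable M (\<lambda>x. exp ((t-\<eta>) * X x))" using intexp by simp
  show ?thesis
  proof (rule Bochner_Integration.integrable_bound)
    show "integrable M (\<lambda>x. (real n/\<eta>)^n * (exp ((t+\<eta>) * X x) + exp ((t-\<eta>) * X x)))"
      using i1 i2 by auto
    show "(\<lambda>x. X x ^ n * exp (t * X x)) \<in> borel_measurable M" by measurable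
    show "AE x in M. norm (X x ^ n * exp (t * X x)) \<le> norm ((real n/\<eta>)^n * (exp ((t+\<eta>) * X x) + exp ((t-\<eta>) * X x)))"
    proof (rule AE_I2)
      fix x
      have "norm (X x ^ n * exp (t * X x)) = \<bar>X x\<bar>^n * exp (t * X x)" by (simp add: abs_mult power_abs)
      also have "\<dots> \<le> (real n/\<eta>)^n * (exp ((t+\<eta>) * X x) + exp ((t-\<eta>) * X x))" by (rule abs_pow_exp[OF \<eta>])
      also have "\<dots> = norm ((real n/\<eta>)^n * (exp ((t+\<eta>) * X x) + exp ((t-\<eta>) * X x)))"
        using \<eta> by (simp add: abs_mult)
      finally show "norm (X x ^ n * exp (t * X x)) \<le> norm ((real n/\<eta>)^n * (exp ((t+\<eta>) * X x) + exp ((t-\<eta>) * X x)))" .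
    qed
  qed
qed

definition "L t = (\<integral>x. exp (t * X x) \<partial>M)"
definition "L1 t = (\<integral>x. X x * exp (t * X x) \<partial>M)"
definition "L2 t = (\<integral>x. (X x)^2 * exp (t * X x) \<partial>M)"

lemma int0: "t > -s0 \<Longrightarrow> integrable M (\<lambda>x. exp (t * X x))" using intexp by simp
lemma int1: "t > -s0 \<Longrightarrow> integrable M (\<lambda>x. X x * exp (t * X x))" using int_pow[of t 1] by simp
lemma int2: "t > -s0 \<Longrightarrow> integrable M (\<lambda>x. (X x)^2 * exp (t * X x))" using int_pow[of t 2] by simp

lemma L_deriv: assumes t0: "t0 > -s0" shows "(L has_real_derivative L1 t0) (at t0)"
proof -
  define \<delta> where "\<delta> = (t0 + s0)/2"
  have \<delta>: "\<delta> > 0" using t0 by (simp add: \<delta>_def)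
  have lo: "t0 - \<delta> > -s0" using t0 unfolding \<delta>_def by (simp add: field_simps)
  have "((\<lambda>t. \<integral>x. exp (t * X x) \<partial>M) has_real_derivative (\<integral>x. X x * exp (t0 * X x) \<partial>M)) (at t0)"
  proof (rule deriv_under_integral[where G="\<lambda>x. \<bar>X x\<bar> * exp ((t0+\<delta>) * X x) + \<bar>X x\<bar> * exp ((t0-\<delta>) * X x)", OF \<delta>])
    show "integrable M (\<lambda>x. exp (t * X x))" if "t \<in> {t0-\<delta>..t0+\<delta>}" for t
      using that lo intexp by simp
    show "(\<lambda>x. X x * exp (t0 * X x)) \<in> borel_measurable M" by measurable
    have "t0+\<delta> > -s0" using \<delta> t0 by simp
    then show "integrable M (\<lambda>x. \<bar>X x\<bar> * exp ((t0+\<delta>) * X x) + \<bar>X x\<bar> * exp ((t0-\<delta>) * X x))"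
      using integrable_abs[OF int1[of "t0+\<delta>"]] integrable_abs[OF int1[OF lo]]
      by (simp add: abs_mult)
    show "((\<lambda>t. exp (t * X x)) has_real_derivative X x * exp (t * X x)) (at t)" for x t
      by (auto intro!: derivative_eq_intros)
    show "\<bar>X x * exp (t * X x)\<bar> \<le> \<bar>X x\<bar> * exp ((t0+\<delta>) * X x) + \<bar>X x\<bar> * exp ((t0-\<delta>) * X x)"
      if "t \<in> {t0-\<delta>..t0+\<delta>}" for x t
    proof -
      have "\<bar>X x\<bar> * exp (t * X x) \<le> \<bar>X x\<bar> * (exp ((t0+\<delta>) * X x) + exp ((t0-\<delta>) * X x))"
        using exp_between[OF that] by (intro mult_left_mono) auto
      then show ?thesis by (simp add: abs_mult algebra_simps)
    qed
  qed
  then show ?thesis unfolding L_def[abs_def] L1_def .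
qed

lemma L1_deriv: assumes t0: "t0 > -s0" shows "(L1 has_real_derivative L2 t0) (at t0)"
proof -
  define \<delta> where "\<delta> = (t0 + s0)/2"
  have \<delta>: "\<delta> > 0" using t0 by (simp add: \<delta>_def)
  have lo: "t0 - \<delta> > -s0" using t0 unfolding \<delta>_def by (simp add: field_simps)
  have "((\<lambda>t. \<integral>x. X x * exp (t * X x) \<partial>M) has_real_derivative (\<integral>x. (X x)^2 * exp (t0 * X x) \<partial>M)) (at t0)"
  proof (rule deriv_under_integral[where G="\<lambda>x. (X x)^2 * exp ((t0+\<delta>) * X x) + (X x)^2 * exp ((t0-\<delta>) * X x)", OF \<delta>])
    show "integrable M (\<lambda>x. X x * exp (t * X x))" if "t \<in> {t0-\<delta>..t0+\<delta>}" for t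
      using that lo int1 by simp
    show "(\<lambda>x. (X x)^2 * exp (t0 * X x)) \<in> borel_measurable M" by measurable
    have "t0+\<delta> > -s0" using \<delta> t0 by simp
    then show "integrable M (\<lambda>x. (X x)^2 * exp ((t0+\<delta>) * X x) + (X x)^2 * exp ((t0-\<delta>) * X x))"
      using int2[of "t0+\<delta>"] int2[OF lo] by simp
    show "((\<lambda>t. X x * exp (t * X x)) has_real_derivative (X x)^2 * exp (t * X x)) (at t)" for x t
      by (auto intro!: derivative_eq_intros simp: power2_eq_square)
    show "\<bar>(X x)^2 * exp (t * X x)\<bar> \<le> (X x)^2 * exp ((t0+\<delta>) * X x) + (X x)^2 * exp ((t0-\<delta>) * X x)"
      if "t \<in> {t0-\<delta>..t0+\<delta>}" for x t
    proof -
      have "(X x)^2 * exp (t * X x) \<le> (X x)^2 * (exp ((t0+\<delta>) * X x) + exp ((t0-\<delta>) * X x))"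
        using exp_between[OF that] by (intro mult_left_mono) auto
      then show ?thesis by (simp add: abs_mult algebra_simps)
    qed
  qed
  then show ?thesis unfolding L1_def[abs_def] L2_def .
qed

lemma L_pos: assumes t: "t \<ge> -s0" shows "L t > 0"
proof -
  have i: "integrable M (\<lambda>x. exp (t * X x))" using intexp t by simp
  have ge: "L t \<ge> 0" unfolding L_def by (rule Bochner_Integration.integral_nonneg) simp
  have "L t \<noteq> 0"
  proof
    assume "L t = 0"
    then have "AE x in M. exp (t * X x) = 0"
      using integral_nonneg_eq_0_iff_AE[OF i] unfolding L_def by simp
    then have "AE x in M. False" by simp
    then show False by simp
  qed
  then show ?thesis using ge by simp
qed

lemma V_pos: assumes t: "t > -s0" shows "L2 t * L t - L1 t * L1 t > 0"
proof -
  have Lp: "L t > 0" using L_pos t by simp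
  define c where "c = L1 t / L t"
  define Q where "Q = (\<integral>x. (X x - c)^2 * exp (t * X x) \<partial>M)"
  have i0: "integrable M (\<lambda>x. exp (t * X x))" using int0 t by simp
  have i1: "integrable M (\<lambda>x. X x * exp (t * X x))" using int1 t by simp
  have i2: "integrable M (\<lambda>x. (X x)^2 * exp (t * X x))" using int2 t by simp
  have expand: "(\<lambda>x. (X x - c)^2 * exp (t * X x)) =
     (\<lambda>x. ((X x)^2 * exp (t * X x) - (2*c) * (X x * exp (t * X x))) + c^2 * exp (t * X x))"
    by (rule ext) (simp add: power2_eq_square algebra_simps)
  have iQ: "integrable M (\<lambda>x. (X x - c)^2 * exp (t * X x))"
    unfolding expand using i0 i1 i2 by simp
  have Qeq: "Q = L2 t - 2*c*L1 t + c^2 * L t"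
    unfolding Q_def expand using i0 i1 i2 by (simp add: L_def L1_def L2_def)
  have V: "L2 t * L t - L1 t * L1 t = L t * Q"
    using Lp unfolding Qeq c_def by (simp add: field_simps power2_eq_square)
  have Qge: "Q \<ge> 0" unfolding Q_def by (rule Bochner_Integration.integral_nonneg) simp
  have "Q \<noteq> 0"
  proof
    assume "Q = 0"
    then have "AE x in M. (X x - c)^2 * exp (t * X x) = 0"
      using integral_nonneg_eq_0_iff_AE[OF iQ] unfolding Q_def by simp
    then have ae: "AE x in M. X x = c" by eventually_elim simp
    have "expectation X = expectation (\<lambda>x. c)"
      by (rule integral_cong_AE) (use ae in auto)
    then have c0: "c = 0" using EX by (simp add: prob_space)
    have "variance X = expectation (\<lambda>x. 0)"
      by (rule integral_cong_AE) (use ae EX c0 in auto)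
    then show False using VX by simp
  qed
  then have "Q > 0" using Qge by simp
  then show ?thesis unfolding V using Lp by simp
qed

lemma cgf_eq: "cgf M X = (\<lambda>t. ln (L t))"
  by (rule ext) (simp add: cgf_def L_def)

lemma philoc_inst: "philoc (cgf M X) (\<lambda>t. L1 t / L t) (\<lambda>t. (L2 t * L t - L1 t * L1 t)/(L t * L t)) s0 (rate M X)"
proof (unfold_locales)
  show "s0 > 0" by (rule s0)
next
  fix t :: real assume t: "t > -s0"
  have Lp: "L t > 0" using L_pos t by simp
  have "DERIV (\<lambda>t. ln (L t)) t :> 1 / L t * L1 t"
    by (rule DERIV_chain2[OF DERIV_ln_divide[OF Lp] L_deriv[OF t]])
  then show "(cgf M X has_real_derivative L1 t / L t) (at t)" unfolding cgf_eq by simp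
next
  fix t :: real assume t: "t > -s0"
  have Lp: "L t > 0" using L_pos t by simp
  show "((\<lambda>t. L1 t / L t) has_real_derivative (L2 t * L t - L1 t * L1 t)/(L t * L t)) (at t)"
    using DERIV_divide[OF L1_deriv[OF t] L_deriv[OF t]] Lp by simp
next
  fix t :: real assume t: "t > -s0"
  have Lp: "L t > 0" using L_pos t by simp
  show "(L2 t * L t - L1 t * L1 t)/(L t * L t) > 0" using V_pos[OF t] Lp by simp
next
  have "L 0 = 1" unfolding L_def by (simp add: prob_space)
  then show "cgf M X 0 = 0" unfolding cgf_eq by simp
next
  have "L 0 = 1" unfolding L_def by (simp add: prob_space)
  moreover have "L1 0 = 0" unfolding L1_def using EX by simp
  ultimately show "L1 0 / L 0 = 0" by simp
next
  show "rate M X = (\<lambda>s. SUP t\<in>{0::real..}. ereal (s * t - cgf M X t))"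
    by (rule ext) (simp add: rate_def)
qed

end

theorem proposition5p1:
  fixes M :: "'a measure" and X :: "'a \<Rightarrow> real" and \<sigma>0 mstar :: real
  assumes "prob_space M"
    and "X \<in> borel_measurable M"
    and "integrable M X"
    and "prob_space.expectation M X = 0"
    and "prob_space.variance M X = 1"
    and "\<sigma>0 > 0"
    and "\<forall>t\<ge>-\<sigma>0. integrable M (\<lambda>x. exp (t * X x))"
    and "mstar > 1"
  shows "((\<exists>ts. cond_a (cgf M X) mstar ts) \<longleftrightarrow> (\<exists>ss. cond_b (rate M X) mstar ss)) \<and>
         (\<forall>ts ss. cond_a (cgf M X) mstar ts \<and> cond_b (rate M X) mstar ss \<longrightarrow>
           rate M X ss = ereal (cgf M X ts) \<and> cgf M X ts = ss * ts / 2 \<and>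
           (cgf M X has_real_derivative ss) (at ts) \<and> ss = ts * mstar \<and>
           (\<exists>J. (\<forall>\<^sub>F s in nhds ss. rate M X s = ereal (J s)) \<and>
                (J has_real_derivative ts) (at ss) \<and> ts = ss / mstar \<and>
                (\<exists>I2 \<phi>2. (deriv J has_real_derivative I2) (at ss) \<and>
                          (deriv (cgf M X) has_real_derivative \<phi>2) (at ts) \<and>
                          I2 * \<phi>2 = 1)))"
proof -
  have "mgfloc M X \<sigma>0"
    unfolding mgfloc_def mgfloc_axioms_def using assms by auto
  then interpret mgfloc M X \<sigma>0 .
  interpret ph: philoc "cgf M X" "\<lambda>t. L1 t / L t" "\<lambda>t. (L2 t * L t - L1 t * L1 t)/(L t * L t)" \<sigma>0 "rate M X"
    by (rule philoc_inst)
  show ?thesis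
    using ph.a_to_b(1)[OF assms(8)] ph.b_to_a[OF assms(8)] ph.moreover_part[OF assms(8)] by blast
qed

end
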